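(* Let $X$ be a complex Banach space and let $T\in L(X)$ be a B-Fredholm operator. Let $S\in L(X)$ be a Drazin inverse of $T$ modulo the ideal $F_0(X)$ of finite rank operators, i.e. $\pi(S)$ is the Drazin inverse of $\pi(T)$ in $L(X)/F_0(X)$, where $\pi:L(X)\to L(X)/F_0(X)$ is the canonical projection. Then $TS-ST$ is a finite rank operator and $$\operatorname{ind}(T)=\tau(TS-ST),$$ where $\operatorname{ind}(T)$ is the usual index of the B-Fredholm operator $T$ and $\tau$ is the trace of finite rank operators.
   Context: $L(X)$ denotes the algebra of bounded linear operators on $X$. An operator $T\in L(X)$ is B-Fredholm if there is $n\in\mathbb{N}$ such that the range $R(T^n)$ is closed and the restriction $T_n:R(T^n)\to R(T^n)$ of $T$ is a Fredholm operator; then $T_m$ is Fredholm with the same index for all $m\ge n$, and the index of $T$ is defined as $\operatorname{ind}(T)=\operatorname{ind}(T_n)$ (the usual Fredholm index $\dim\ker-\operatorname{codim}$ range). An element $x$ of an algebra $B$ is Drazin invertible if there exist $y\in B$ and $k\ge1$ with $xy=yx$, $yxy=y$, $x^kyx=x^k$; $y$ is then unique and called the Drazin inverse of $x$. For a finite rank operator $F$ written as $F(x)=\sum_{i=1}^n x_i'(x)x_i$ with $x_1,\dots,x_n$ a basis of $R(F)$ and $x_1',\dots,x_n'$ continuous linear functionals on $X$, its trace is $\tau(F)=\sum_{i=1}^n x_i'(x_i)$. *)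

theory Defs
  imports "HOL-Analysis.Analysis"
begin

class complex_normed_vector = real_normed_vector +
  fixes scaleC :: "complex \<Rightarrow> 'a \<Rightarrow> 'a" (infixr \<open>*\<^sub>C\<close> 75)
  assumes scaleC_add_right: "a *\<^sub>C (x + y) = a *\<^sub>C x + a *\<^sub>C y"
    and scaleC_add_left: "(a + b) *\<^sub>C x = a *\<^sub>C x + b *\<^sub>C x"
    and scaleC_scaleC: "a *\<^sub>C (b *\<^sub>C x) = (a * b) *\<^sub>C x"
    and scaleC_one: "1 *\<^sub>C x = x"
    and scaleC_of_real: "of_real r *\<^sub>C x = r *\<^sub>R x"
    and norm_scaleC: "norm (a *\<^sub>C x) = cmod a * norm x"

definition cspan :: "'a::complex_normed_vector set \<Rightarrow> 'a set" where
  "cspan = module.span scaleC"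

definition cindependent :: "'a::complex_normed_vector set \<Rightarrow> bool" where
  "cindependent B = (\<not> module.dependent scaleC B)"

definition cdim :: "'a::complex_normed_vector set \<Rightarrow> nat" where
  "cdim = vector_space.dim scaleC"

definition cbounded_linear :: "('a::complex_normed_vector \<Rightarrow> 'a) \<Rightarrow> bool" where
  "cbounded_linear T \<longleftrightarrow> bounded_linear T \<and> (\<forall>c x. T (c *\<^sub>C x) = c *\<^sub>C T x)"

definition cbounded_functional :: "('a::complex_normed_vector \<Rightarrow> complex) \<Rightarrow> bool" where
  "cbounded_functional f \<longleftrightarrow> bounded_linear f \<and> (\<forall>c x. f (c *\<^sub>C x) = c * f x)"

definition finite_rank :: "('a::complex_normed_vector \<Rightarrow> 'a) \<Rightarrow> bool" where
  "finite_rank F \<longleftrightarrow> cbounded_linear F \<and> (\<exists>B. finite B \<and> range F \<subseteq> cspan B)"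

text \<open>Codimension of a subspace R inside M: the least number of vectors whose span
  together with R gives M (= complex dimension of M/R).\<close>

definition codim_in :: "'a::complex_normed_vector set \<Rightarrow> 'a set \<Rightarrow> nat" where
  "codim_in M R = (LEAST d. \<exists>C. finite C \<and> card C = d \<and> M = {r + c |r c. r \<in> R \<and> c \<in> cspan C})"

definition fredholm_on :: "'a::complex_normed_vector set \<Rightarrow> ('a \<Rightarrow> 'a) \<Rightarrow> bool" where
  "fredholm_on M T \<longleftrightarrow> T ` M \<subseteq> M \<and>
     (\<exists>B. finite B \<and> cspan B = {x \<in> M. T x = 0}) \<and>
     closed (T ` M) \<and>
     (\<exists>C. finite C \<and> M = {r + c |r c. r \<in> T ` M \<and> c \<in> cspan C})"

definition index_on :: "'a::complex_normed_vector set \<Rightarrow> ('a \<Rightarrow> 'a) \<Rightarrow> int" where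
  "index_on M T = int (cdim {x \<in> M. T x = 0}) - int (codim_in M (T ` M))"

definition B_fredholm :: "('a::complex_normed_vector \<Rightarrow> 'a) \<Rightarrow> bool" where
  "B_fredholm T \<longleftrightarrow> cbounded_linear T \<and>
     (\<exists>n. closed (range (T ^^ n)) \<and> fredholm_on (range (T ^^ n)) T)"

definition B_index :: "('a::complex_normed_vector \<Rightarrow> 'a) \<Rightarrow> int" where
  "B_index T = index_on (range (T ^^ (LEAST n. closed (range (T ^^ n)) \<and> fredholm_on (range (T ^^ n)) T))) T"

text \<open>pi(S) is the Drazin inverse of pi(T) in L(X)/F_0(X), unfolded: pi(a) = pi(b) iff a - b
  is of finite rank.\<close>

definition drazin_inverse_mod_F0 :: "('a::complex_normed_vector \<Rightarrow> 'a) \<Rightarrow> ('a \<Rightarrow> 'a) \<Rightarrow> bool" where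
  "drazin_inverse_mod_F0 T S \<longleftrightarrow> cbounded_linear T \<and> cbounded_linear S \<and>
     finite_rank (\<lambda>x. T (S x) - S (T x)) \<and>
     finite_rank (\<lambda>x. S (T (S x)) - S x) \<and>
     (\<exists>k\<ge>1. finite_rank (\<lambda>x. (T ^^ k) (S (T x)) - (T ^^ k) x))"

definition frank_trace :: "('a::complex_normed_vector \<Rightarrow> 'a) \<Rightarrow> complex" where
  "frank_trace F = (SOME t. \<exists>n (xs :: nat \<Rightarrow> 'a) (fs :: nat \<Rightarrow> 'a \<Rightarrow> complex).
      inj_on xs {..<n} \<and> cindependent (xs ` {..<n}) \<and> cspan (xs ` {..<n}) = range F \<and>
      (\<forall>i<n. cbounded_functional (fs i)) \<and>
      (\<forall>x. F x = (\<Sum>i<n. fs i x *\<^sub>C xs i)) \<and>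
      t = (\<Sum>i<n. fs i (xs i)))"

end

theory Submission
  imports Defs
begin


interpretation cv: vector_space "scaleC :: complex \<Rightarrow> 'a::complex_normed_vector \<Rightarrow> 'a"
  by unfold_locales (simp_all add: scaleC_add_right scaleC_add_left scaleC_scaleC scaleC_one)

interpretation cvp: vector_space_pair "scaleC :: complex \<Rightarrow> 'a::complex_normed_vector \<Rightarrow> 'a"
   "scaleC :: complex \<Rightarrow> 'a::complex_normed_vector \<Rightarrow> 'a" ..

lemma cspan_eq: "cspan = cv.span" by (simp add: cspan_def)
lemma cind_eq: "cindependent B = cv.independent B" by (simp add: cindependent_def)
lemma cdim_eq: "cdim = cv.dim" by (simp add: cdim_def)

definition clin :: "('a::complex_normed_vector \<Rightarrow> 'a) \<Rightarrow> bool" where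
  "clin f \<longleftrightarrow> (\<forall>x y. f (x + y) = f x + f y) \<and> (\<forall>c x. f (c *\<^sub>C x) = c *\<^sub>C f x)"

definition cfun :: "('a::complex_normed_vector \<Rightarrow> complex) \<Rightarrow> bool" where
  "cfun f \<longleftrightarrow> (\<forall>x y. f (x + y) = f x + f y) \<and> (\<forall>c x. f (c *\<^sub>C x) = c * f x)"

lemma clin_linear: "clin f \<longleftrightarrow> Vector_Spaces.linear scaleC scaleC f"
  unfolding clin_def Vector_Spaces.linear_iff using cv.vector_space_axioms by auto

lemma cfun_0: "cfun f \<Longrightarrow> f 0 = 0"
  unfolding cfun_def by (metis add_cancel_left_left add_0)
lemma cfun_sum: "cfun f \<Longrightarrow> f (sum g A) = (\<Sum>a\<in>A. f (g a))"
  by (induction A rule: infinite_finite_induct) (auto simp: cfun_0, simp add: cfun_def)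
lemma cfun_scale: "cfun f \<Longrightarrow> f (c *\<^sub>C x) = c * f x" by (simp add: cfun_def)
lemma cfun_add: "cfun f \<Longrightarrow> f (x + y) = f x + f y" by (simp add: cfun_def)
lemma clin_0: "clin f \<Longrightarrow> f 0 = 0"
  unfolding clin_def by (metis add_cancel_left_left add_0)
lemma clin_sum: "clin f \<Longrightarrow> f (sum g A) = (\<Sum>a\<in>A. f (g a))"
  by (induction A rule: infinite_finite_induct) (auto simp: clin_0, simp add: clin_def)
lemma clin_scale: "clin f \<Longrightarrow> f (c *\<^sub>C x) = c *\<^sub>C f x" by (simp add: clin_def)
lemma clin_add: "clin f \<Longrightarrow> f (x + y) = f x + f y" by (simp add: clin_def)
lemma clin_minus: "clin f \<Longrightarrow> f (- x) = - f x"
  by (metis add.right_inverse clin_0 clin_add neg_eq_iff_add_eq_0)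
lemma clin_diff: "clin f \<Longrightarrow> f (x - y) = f x - f y"
  by (metis clin_add clin_minus diff_conv_add_uminus)

definition frep :: "('a::complex_normed_vector \<Rightarrow> 'a) \<Rightarrow> nat \<Rightarrow> (nat \<Rightarrow> 'a) \<Rightarrow> (nat \<Rightarrow> 'a \<Rightarrow> complex) \<Rightarrow> bool" where
  "frep F n v f \<longleftrightarrow> (\<forall>i<n. cfun (f i)) \<and> (\<forall>x. F x = (\<Sum>i<n. f i x *\<^sub>C v i))"

definition atr :: "('a::complex_normed_vector \<Rightarrow> 'a) \<Rightarrow> complex" where
  "atr F = (SOME t. \<exists>n v f. frep F n v f \<and> t = (\<Sum>i<n. f i (v i)))"

definition afr :: "('a::complex_normed_vector \<Rightarrow> 'a) \<Rightarrow> bool" where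
  "afr F \<longleftrightarrow> clin F \<and> (\<exists>B. finite B \<and> range F \<subseteq> cv.span B)"

lemma frep_zero_trace:
  assumes "frep (\<lambda>_. 0) n v f"
  shows "(\<Sum>i<n. f i (v i)) = 0"
proof -
  obtain E where E: "E \<subseteq> v ` {..<n}" "cv.independent E" "v ` {..<n} \<subseteq> cv.span E"
    using cv.maximal_independent_subset by blast
  have finE: "finite E" using E(1) finite_subset by blast
  define r where "r i = cv.representation E (v i)" for i
  have vi: "v i = (\<Sum>e\<in>E. r i e *\<^sub>C e)" if "i < n" for i
    unfolding r_def using E that finE by (intro cv.sum_representation_eq[symmetric]) auto
  have fl: "cfun (f i)" if "i < n" for i using assms that by (simp add: frep_def)
  have coef: "(\<Sum>i<n. f i x * r i e) = 0" if "e \<in> E" for x e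
  proof -
    have "0 = (\<Sum>i<n. f i x *\<^sub>C v i)" using assms by (simp add: frep_def)
    also have "\<dots> = (\<Sum>i<n. f i x *\<^sub>C (\<Sum>e\<in>E. r i e *\<^sub>C e))"
      by (rule sum.cong) (auto simp: vi)
    also have "\<dots> = (\<Sum>i<n. \<Sum>e\<in>E. (f i x * r i e) *\<^sub>C e)"
      by (simp add: cv.scale_sum_right)
    also have "\<dots> = (\<Sum>e\<in>E. \<Sum>i<n. (f i x * r i e) *\<^sub>C e)"
      by (rule sum.swap)
    also have "\<dots> = (\<Sum>e\<in>E. (\<Sum>i<n. f i x * r i e) *\<^sub>C e)"
      by (simp add: cv.scale_sum_left)
    finally have "(\<Sum>e\<in>E. (\<Sum>i<n. f i x * r i e) *\<^sub>C e) = 0" by simp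
    from cv.independentD[OF E(2) finE order_refl this that] show ?thesis by simp
  qed
  have "(\<Sum>i<n. f i (v i)) = (\<Sum>i<n. \<Sum>e\<in>E. f i e * r i e)"
    by (rule sum.cong) (auto simp: vi fl cfun_sum cfun_scale mult.commute)
  also have "\<dots> = (\<Sum>e\<in>E. \<Sum>i<n. f i e * r i e)" by (rule sum.swap)
  also have "\<dots> = 0" by (simp add: coef)
  finally show ?thesis .
qed

lemma sum_split_add: "(\<Sum>i<n+(m::nat). h i) = (\<Sum>i<n. h i) + (\<Sum>i<m. h (n+i))"
  by (induction m) (simp_all add: add.assoc)

definition cat_v :: "nat \<Rightarrow> (nat \<Rightarrow> 'b) \<Rightarrow> (nat \<Rightarrow> 'b) \<Rightarrow> nat \<Rightarrow> 'b" where
  "cat_v n v w i = (if i < n then v i else w (i - n))"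

lemma sum_cat: "(\<Sum>i<n+m. h i (cat_v n v w i) (cat_v n f g i)) =
   (\<Sum>i<n. h i (v i) (f i)) + (\<Sum>i<m. h (n+i) (w i) (g i))"
  by (simp add: sum_split_add cat_v_def)

lemma frep_add:
  assumes "frep F n v f" "frep H m w g"
  shows "frep (\<lambda>x. F x + H x) (n+m) (cat_v n v w) (cat_v n f g)"
  using assms unfolding frep_def
  by (auto simp: cat_v_def sum_split_add)

lemma frep_neg:
  assumes "frep F n v f"
  shows "frep (\<lambda>x. - F x) n v (\<lambda>i x. - f i x)"
  using assms unfolding frep_def cfun_def by (auto simp: sum_negf)

lemma frep_trace_unique:
  assumes "frep F n v f" "frep F m w g"
  shows "(\<Sum>i<n. f i (v i)) = (\<Sum>i<m. g i (w i))"
proof -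
  have "frep (\<lambda>x. F x + - F x) (n+m) (cat_v n v w) (cat_v n f (\<lambda>i x. - g i x))"
    by (rule frep_add[OF assms(1) frep_neg[OF assms(2)]])
  then have "frep (\<lambda>_. 0) (n+m) (cat_v n v w) (cat_v n f (\<lambda>i x. - g i x))" by simp
  from frep_zero_trace[OF this] show ?thesis 
    unfolding sum_split_add cat_v_def by (simp add: sum_negf)
qed

lemma atr_eq:
  assumes "frep F n v f" shows "atr F = (\<Sum>i<n. f i (v i))"
proof -
  have "\<exists>n v f. frep F n v f \<and> atr F = (\<Sum>i<n. f i (v i))"
    unfolding atr_def by (rule someI_ex) (use assms in blast)
  then show ?thesis using frep_trace_unique assms by metis
qed

lemma clin_mhom: "clin L \<Longrightarrow> module_hom scaleC scaleC L"
  by (simp add: clin_linear module_hom_iff_linear)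

lemma clin_span_image: "clin L \<Longrightarrow> L ` cv.span B = cv.span (L ` B)"
  by (rule sym, rule module_hom.span_image[OF clin_mhom])

lemma clin_comp: "clin L \<Longrightarrow> clin K \<Longrightarrow> clin (\<lambda>x. L (K x))"
  by (simp add: clin_def)
lemma clin_id: "clin (\<lambda>x. x)" by (simp add: clin_def)
lemma clin_add2: "clin L \<Longrightarrow> clin K \<Longrightarrow> clin (\<lambda>x. L x + K x)"
  unfolding clin_def by (simp add: cv.scale_right_distrib add_ac)
lemma clin_neg: "clin L \<Longrightarrow> clin (\<lambda>x. - L x)"
  by (simp add: clin_def cv.scale_minus_right)
lemma clin_diff2: "clin L \<Longrightarrow> clin K \<Longrightarrow> clin (\<lambda>x. L x - K x)"
proof -
  assume a: "clin L" "clin K"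
  have "clin (\<lambda>x. L x + - K x)" by (rule clin_add2[OF a(1) clin_neg[OF a(2)]])
  moreover have "(\<lambda>x. L x + - K x) = (\<lambda>x. L x - K x)" by simp
  ultimately show ?thesis by simp
qed
lemma clin_zero: "clin (\<lambda>x. 0)" by (simp add: clin_def)
lemma clin_sum2: "(\<And>i. i \<in> I \<Longrightarrow> clin (L i)) \<Longrightarrow> clin (\<lambda>x. \<Sum>i\<in>I. L i x)"
  by (induction I rule: infinite_finite_induct) (auto simp: clin_zero intro!: clin_add2)
lemma clin_funpow: "clin L \<Longrightarrow> clin (L ^^ n)"
proof (induction n)
  case 0 show ?case by (simp add: clin_def)
next
  case (Suc n) then show ?case using clin_comp[of L "L ^^ n"] by (simp add: comp_def)
qed

lemma span_rep_sum:
  assumes "cv.independent E" "finite E" "bij_betw h {..<card E} E" "u \<in> cv.span E"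
  shows "u = (\<Sum>i<card E. cv.representation E u (h i) *\<^sub>C h i)"
proof -
  have "u = (\<Sum>e\<in>E. cv.representation E u e *\<^sub>C e)"
    using assms by (intro cv.sum_representation_eq[symmetric]) auto
  also have "\<dots> = (\<Sum>i<card E. cv.representation E u (h i) *\<^sub>C h i)"
    using sum.reindex_bij_betw[OF assms(3), of "\<lambda>e. cv.representation E u e *\<^sub>C e"] by simp
  finally show ?thesis .
qed

lemma afr_frep: assumes "afr F" shows "\<exists>n v f. frep F n v f"
proof -
  obtain B where B: "finite B" "range F \<subseteq> cv.span B" and lF: "clin F" using assms by (auto simp: afr_def)
  obtain E where E: "E \<subseteq> B" "cv.independent E" "B \<subseteq> cv.span E"
    using cv.maximal_independent_subset by blast
  have finE: "finite E" using E B finite_subset by blast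
  have sp: "range F \<subseteq> cv.span E"
    using B(2) cv.span_minimal[OF E(3) cv.subspace_span] by blast
  obtain h where h: "bij_betw h {..<card E} E"
    using ex_bij_betw_nat_finite[OF finE] by (auto simp: atLeast0LessThan)
  have Fx: "F x \<in> cv.span E" for x using sp by auto
  show ?thesis
  proof (intro exI)
    show "frep F (card E) h (\<lambda>i x. cv.representation E (F x) (h i))"
      unfolding frep_def
    proof safe
      fix i assume "i < card E"
      show "cfun (\<lambda>x. cv.representation E (F x) (h i))"
        unfolding cfun_def using lF Fx E(2)
        by (auto simp: clin_add clin_scale cv.representation_add cv.representation_scale)
    next
      fix x show "F x = (\<Sum>i<card E. cv.representation E (F x) (h i) *\<^sub>C h i)"
        by (rule span_rep_sum[OF E(2) finE h Fx])
    qed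
  qed
qed

lemma frep_compR: "frep F n v f \<Longrightarrow> clin L \<Longrightarrow> frep (\<lambda>x. F (L x)) n v (\<lambda>i x. f i (L x))"
  unfolding frep_def cfun_def by (auto simp: clin_add clin_scale)

lemma frep_compL: "frep F n v f \<Longrightarrow> clin L \<Longrightarrow> frep (\<lambda>x. L (F x)) n (\<lambda>i. L (v i)) f"
  unfolding frep_def by (auto simp: clin_sum clin_scale)

lemma atr_cyclic:
  assumes "afr F" "clin L"
  shows "atr (\<lambda>x. F (L x)) = atr (\<lambda>x. L (F x))"
proof -
  obtain n v f where r: "frep F n v f" using afr_frep[OF assms(1)] by blast
  show ?thesis
    using atr_eq[OF frep_compR[OF r assms(2)]] atr_eq[OF frep_compL[OF r assms(2)]] by simp
qed

lemma atr_add: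
  assumes "afr F" "afr H"
  shows "atr (\<lambda>x. F x + H x) = atr F + atr H"
proof -
  obtain n v f where r: "frep F n v f" using afr_frep[OF assms(1)] by blast
  obtain m w g where r2: "frep H m w g" using afr_frep[OF assms(2)] by blast
  show ?thesis using atr_eq[OF frep_add[OF r r2]] atr_eq[OF r] atr_eq[OF r2]
    by (simp add: sum_split_add cat_v_def)
qed

lemma atr_neg:
  assumes "afr F"
  shows "atr (\<lambda>x. - F x) = - atr F"
proof -
  obtain n v f where r: "frep F n v f" using afr_frep[OF assms(1)] by blast
  show ?thesis using atr_eq[OF frep_neg[OF r]] atr_eq[OF r] by (simp add: sum_negf)
qed

lemma afr_zero: "afr (\<lambda>x. 0)"
  unfolding afr_def by (auto simp: clin_zero intro!: exI[of _ "{}"] cv.span_zero)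

lemma afr_add: "afr F \<Longrightarrow> afr H \<Longrightarrow> afr (\<lambda>x. F x + H x)"
  unfolding afr_def
proof (elim conjE exE, intro conjI)
  fix B C assume *: "clin F" "clin H" "finite B" "range F \<subseteq> cv.span B" "finite C" "range H \<subseteq> cv.span C"
  show "clin (\<lambda>x. F x + H x)" using * by (simp add: clin_add2)
  show "\<exists>B. finite B \<and> range (\<lambda>x. F x + H x) \<subseteq> cv.span B"
  proof (intro exI[of _ "B \<union> C"] conjI)
    show "finite (B \<union> C)" using * by simp
    have "cv.span B \<subseteq> cv.span (B \<union> C)" "cv.span C \<subseteq> cv.span (B \<union> C)"
      by (auto intro: cv.span_mono[THEN subsetD])
    then show "range (\<lambda>x. F x + H x) \<subseteq> cv.span (B \<union> C)"
      using * by (blast intro: cv.span_add)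
  qed
qed

lemma afr_neg: "afr F \<Longrightarrow> afr (\<lambda>x. - F x)"
  unfolding afr_def by (auto simp: clin_neg intro: cv.span_neg)

lemma afr_diff: "afr F \<Longrightarrow> afr H \<Longrightarrow> afr (\<lambda>x. F x - H x)"
proof -
  assume a: "afr F" "afr H"
  have "afr (\<lambda>x. F x + - H x)" by (rule afr_add[OF a(1) afr_neg[OF a(2)]])
  moreover have "(\<lambda>x. F x + - H x) = (\<lambda>x. F x - H x)" by simp
  ultimately show ?thesis by simp
qed

lemma atr_diff: "afr F \<Longrightarrow> afr H \<Longrightarrow> atr (\<lambda>x. F x - H x) = atr F - atr H"
proof -
  assume a: "afr F" "afr H"
  have "atr (\<lambda>x. F x + - H x) = atr F + atr (\<lambda>x. - H x)" by (rule atr_add[OF a(1) afr_neg[OF a(2)]])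
  moreover have "(\<lambda>x. F x + - H x) = (\<lambda>x. F x - H x)" by simp
  ultimately show ?thesis using atr_neg[OF a(2)] by simp
qed

lemma afr_compR: "afr F \<Longrightarrow> clin L \<Longrightarrow> afr (\<lambda>x. F (L x))"
  unfolding afr_def by (auto simp: clin_comp)

lemma afr_compL: "afr F \<Longrightarrow> clin L \<Longrightarrow> afr (\<lambda>x. L (F x))"
  unfolding afr_def
proof (elim conjE exE, intro conjI)
  fix B assume *: "clin F" "finite B" "range F \<subseteq> cv.span B" "clin L"
  show "clin (\<lambda>x. L (F x))" using * by (simp add: clin_comp)
  show "\<exists>B. finite B \<and> range (\<lambda>x. L (F x)) \<subseteq> cv.span B"
    using * clin_span_image[of L B] by (intro exI[of _ "L ` B"]) auto
qed

lemma afr_sum: "(\<And>i. i \<in> I \<Longrightarrow> afr (F i)) \<Longrightarrow> afr (\<lambda>x. \<Sum>i\<in>I. F i x)"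
  by (induction I rule: infinite_finite_induct) (auto simp: afr_zero intro!: afr_add)

lemma atr_sum: "finite I \<Longrightarrow> (\<And>i. i \<in> I \<Longrightarrow> afr (F i)) \<Longrightarrow> atr (\<lambda>x. \<Sum>i\<in>I. F i x) = (\<Sum>i\<in>I. atr (F i))"
proof (induction I rule: finite_induct)
  case empty
  have "frep (\<lambda>x. \<Sum>i\<in>{}. F i x) 0 v f" for v f by (simp add: frep_def)
  then show ?case using atr_eq by fastforce
next
  case (insert a I)
  then show ?case by (simp add: atr_add afr_sum)
qed

lemma afr_range_on:
  assumes "clin D" "\<And>x. x \<in> M \<Longrightarrow> D x \<in> cv.span B" "finite B" "clin L" "range L \<subseteq> M"
  shows "afr (\<lambda>x. D (L x))"
  using assms unfolding afr_def by (auto simp: clin_comp)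




definition feq :: "('a::complex_normed_vector \<Rightarrow> 'a) \<Rightarrow> ('a \<Rightarrow> 'a) \<Rightarrow> bool" where
  "feq a b \<longleftrightarrow> afr (\<lambda>x. a x - b x)"

lemma clin_o: "clin a \<Longrightarrow> clin b \<Longrightarrow> clin (a \<circ> b)"
  by (simp add: comp_def clin_comp)

lemma feq_refl: "clin a \<Longrightarrow> feq a a"
  by (simp add: feq_def afr_zero)

lemma feq_sym: "feq a b \<Longrightarrow> feq b a"
proof -
  assume "feq a b"
  then have "afr (\<lambda>x. - (a x - b x))" unfolding feq_def by (rule afr_neg)
  then show ?thesis by (simp add: feq_def)
qed

lemma feq_trans[trans]: "feq a b \<Longrightarrow> feq b c \<Longrightarrow> feq a c"
proof -
  assume "feq a b" "feq b c"
  then have "afr (\<lambda>x. (a x - b x) + (b x - c x))" unfolding feq_def by (rule afr_add)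
  then show ?thesis by (simp add: feq_def)
qed

lemma feq_eq_trans[trans]: "a = b \<Longrightarrow> feq b c \<Longrightarrow> feq a c" by simp
lemma feq_trans_eq[trans]: "feq a b \<Longrightarrow> b = c \<Longrightarrow> feq a c" by simp

lemma feq_L: "feq a b \<Longrightarrow> clin L \<Longrightarrow> feq (L \<circ> a) (L \<circ> b)"
proof -
  assume "feq a b" "clin L"
  then have "afr (\<lambda>x. L (a x - b x))" unfolding feq_def by (rule afr_compL)
  then show ?thesis using \<open>clin L\<close> by (simp add: feq_def clin_diff)
qed

lemma feq_R: "feq a b \<Longrightarrow> clin R \<Longrightarrow> feq (a \<circ> R) (b \<circ> R)"
proof -
  assume "feq a b" "clin R"
  then have "afr (\<lambda>x. a (R x) - b (R x))" unfolding feq_def by (rule afr_compR)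
  then show ?thesis by (simp add: feq_def)
qed

lemma feq_LR: "feq a b \<Longrightarrow> clin L \<Longrightarrow> clin R \<Longrightarrow> feq (L \<circ> a \<circ> R) (L \<circ> b \<circ> R)"
  using feq_L feq_R by blast

definition drz :: "('a::complex_normed_vector \<Rightarrow> 'a) \<Rightarrow> ('a \<Rightarrow> 'a) \<Rightarrow> nat \<Rightarrow> bool" where
  "drz x y k \<longleftrightarrow> clin x \<and> clin y \<and> feq (x \<circ> y) (y \<circ> x) \<and> feq (y \<circ> x \<circ> y) y \<and>
     feq (x ^^ k \<circ> y \<circ> x) (x ^^ k)"

lemma fpa: "(f ^^ m) ((f ^^ n) x) = (f ^^ (m + n)) x" by (simp add: funpow_add)

lemma clin_pow: "clin x \<Longrightarrow> clin (x ^^ n)" by (rule clin_funpow)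

lemma drz_comm_pow:
  assumes "drz x y k" shows "feq (y \<circ> x ^^ j) (x ^^ j \<circ> y)"
proof (induction j)
  case 0 show ?case using assms by (simp add: drz_def feq_refl)
next
  case (Suc j)
  have cx: "clin x" and cy: "clin y" and c: "feq (x \<circ> y) (y \<circ> x)" using assms by (auto simp: drz_def)
  have "y \<circ> x ^^ Suc j = (y \<circ> x ^^ j) \<circ> x" by (rule ext) (simp add: funpow_swap1)
  also have "feq \<dots> ((x ^^ j \<circ> y) \<circ> x)" by (rule feq_R[OF Suc cx])
  also have "(x ^^ j \<circ> y) \<circ> x = x ^^ j \<circ> (y \<circ> x)" by (simp add: o_assoc)
  also have "feq \<dots> (x ^^ j \<circ> (x \<circ> y))" by (rule feq_L[OF feq_sym[OF c] clin_pow[OF cx]])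
  also have "x ^^ j \<circ> (x \<circ> y) = x ^^ Suc j \<circ> y" by (rule ext) (simp add: funpow_swap1)
  finally show ?case .
qed

lemma drz_left:
  assumes "drz x y k" shows "feq y (y ^^ Suc j \<circ> x ^^ j)"
proof (induction j)
  case 0 show ?case using assms by (simp add: drz_def feq_refl)
next
  case (Suc j)
  have cx: "clin x" and cy: "clin y" and c: "feq (x \<circ> y) (y \<circ> x)" and d: "feq (y \<circ> x \<circ> y) y"
    using assms by (auto simp: drz_def)
  have yyx: "feq y (y \<circ> y \<circ> x)"
  proof -
    have "feq y (y \<circ> x \<circ> y)" by (rule feq_sym[OF d])
    also have "y \<circ> x \<circ> y = y \<circ> (x \<circ> y)" by (simp add: o_assoc)
    also have "feq \<dots> (y \<circ> (y \<circ> x))" by (rule feq_L[OF c cy])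
    finally show ?thesis by (simp add: o_assoc)
  qed
  have "feq y (y ^^ Suc j \<circ> x ^^ j)" by (rule Suc)
  also have "y ^^ Suc j \<circ> x ^^ j = y ^^ j \<circ> y \<circ> x ^^ j" by (rule ext) (simp add: funpow_swap1)
  also have "feq \<dots> (y ^^ j \<circ> (y \<circ> y \<circ> x) \<circ> x ^^ j)"
    by (rule feq_LR[OF yyx clin_pow[OF cy] clin_pow[OF cx]])
  also have "y ^^ j \<circ> (y \<circ> y \<circ> x) \<circ> x ^^ j = y ^^ Suc (Suc j) \<circ> x ^^ Suc j"
    by (rule ext) (simp add: funpow_swap1)
  finally show ?case .
qed

lemma drz_right:
  assumes "drz x y k" shows "feq y (x ^^ j \<circ> y ^^ Suc j)"
proof (induction j)
  case 0 show ?case using assms by (simp add: drz_def feq_refl)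
next
  case (Suc j)
  have cx: "clin x" and cy: "clin y" and c: "feq (x \<circ> y) (y \<circ> x)" and d: "feq (y \<circ> x \<circ> y) y"
    using assms by (auto simp: drz_def)
  have xyy: "feq y (x \<circ> y \<circ> y)"
  proof -
    have "feq y (y \<circ> x \<circ> y)" by (rule feq_sym[OF d])
    also have "feq \<dots> (x \<circ> y \<circ> y)" by (rule feq_R[OF feq_sym[OF c] cy])
    finally show ?thesis .
  qed
  have "feq y (x ^^ j \<circ> y ^^ Suc j)" by (rule Suc)
  also have "x ^^ j \<circ> y ^^ Suc j = x ^^ j \<circ> y \<circ> y ^^ j" by (simp add: o_assoc)
  also have "feq \<dots> (x ^^ j \<circ> (x \<circ> y \<circ> y) \<circ> y ^^ j)"
    by (rule feq_LR[OF xyy clin_pow[OF cx] clin_pow[OF cy]])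
  also have "x ^^ j \<circ> (x \<circ> y \<circ> y) \<circ> y ^^ j = x ^^ Suc j \<circ> y ^^ Suc (Suc j)"
    by (rule ext) (simp add: funpow_swap1)
  finally show ?case .
qed

lemma drz_pow_right:
  assumes "drz x z l" "l \<le> m" shows "feq (x ^^ m) (x ^^ Suc m \<circ> z)"
proof -
  have cx: "clin x" and cz: "clin z" and c: "feq (x \<circ> z) (z \<circ> x)" and e: "feq (x ^^ l \<circ> z \<circ> x) (x ^^ l)"
    using assms by (auto simp: drz_def)
  have "feq (x ^^ l) (x ^^ l \<circ> z \<circ> x)" by (rule feq_sym[OF e])
  also have "x ^^ l \<circ> z \<circ> x = x ^^ l \<circ> (z \<circ> x)" by (simp add: o_assoc)
  also have "feq \<dots> (x ^^ l \<circ> (x \<circ> z))" by (rule feq_L[OF feq_sym[OF c] clin_pow[OF cx]])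
  also have "x ^^ l \<circ> (x \<circ> z) = x ^^ Suc l \<circ> z" by (rule ext) (simp add: funpow_swap1)
  finally have *: "feq (x ^^ l) (x ^^ Suc l \<circ> z)" .
  have "x ^^ m = x ^^ (m - l) \<circ> x ^^ l" using assms(2) by (simp add: funpow_add[symmetric])
  also have "feq \<dots> (x ^^ (m - l) \<circ> (x ^^ Suc l \<circ> z))" by (rule feq_L[OF * clin_pow[OF cx]])
  also have "x ^^ (m - l) \<circ> (x ^^ Suc l \<circ> z) = x ^^ Suc m \<circ> z"
    using assms(2) by (intro ext) (simp add: funpow_swap1 fpa)
  finally show ?thesis .
qed

lemma drz_pow_left:
  assumes "drz x y k" "k \<le> m" shows "feq (x ^^ m) (y \<circ> x ^^ Suc m)"
proof -
  have cx: "clin x" and cy: "clin y" and e: "feq (x ^^ k \<circ> y \<circ> x) (x ^^ k)"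
    using assms by (auto simp: drz_def)
  have "feq (x ^^ k) (x ^^ k \<circ> y \<circ> x)" by (rule feq_sym[OF e])
  also have "feq \<dots> (y \<circ> x ^^ k \<circ> x)" by (rule feq_R[OF feq_sym[OF drz_comm_pow[OF assms(1)]] cx])
  also have "y \<circ> x ^^ k \<circ> x = y \<circ> x ^^ Suc k" by (rule ext) (simp add: funpow_swap1)
  finally have *: "feq (x ^^ k) (y \<circ> x ^^ Suc k)" .
  have "x ^^ m = x ^^ (m - k) \<circ> x ^^ k" using assms(2) by (simp add: funpow_add[symmetric])
  also have "feq \<dots> (x ^^ (m - k) \<circ> (y \<circ> x ^^ Suc k))" by (rule feq_L[OF * clin_pow[OF cx]])
  also have "x ^^ (m - k) \<circ> (y \<circ> x ^^ Suc k) = (x ^^ (m - k) \<circ> y) \<circ> x ^^ Suc k" by (simp add: o_assoc)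
  also have "feq \<dots> ((y \<circ> x ^^ (m - k)) \<circ> x ^^ Suc k)"
    by (rule feq_R[OF feq_sym[OF drz_comm_pow[OF assms(1)]] clin_pow[OF cx]])
  also have "(y \<circ> x ^^ (m - k)) \<circ> x ^^ Suc k = y \<circ> x ^^ Suc m"
    using assms(2) by (intro ext) (simp add: funpow_swap1 fpa)
  finally show ?thesis .
qed

lemma drz_unique:
  assumes y: "drz x y k" and z: "drz x z l"
  shows "feq y z"
proof -
  define m where "m = max k l"
  have cx: "clin x" and cy: "clin y" and cz: "clin z" using y z by (auto simp: drz_def)
  have "feq y (y ^^ Suc m \<circ> x ^^ m)" by (rule drz_left[OF y])
  also have "feq \<dots> (y ^^ Suc m \<circ> (x ^^ Suc m \<circ> z))"
    by (rule feq_L[OF drz_pow_right[OF z] clin_pow[OF cy]]) (simp add: m_def)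
  also have "y ^^ Suc m \<circ> (x ^^ Suc m \<circ> z) = (y ^^ Suc m \<circ> x ^^ m) \<circ> (x \<circ> z)"
    by (rule ext) (simp add: funpow_swap1)
  also have "feq \<dots> (y \<circ> (x \<circ> z))"
    by (rule feq_R[OF feq_sym[OF drz_left[OF y]] clin_o[OF cx cz]])
  finally have 1: "feq y (y \<circ> x \<circ> z)" by (simp add: o_assoc)
  have "feq z (x ^^ m \<circ> z ^^ Suc m)" by (rule drz_right[OF z])
  also have "feq \<dots> ((y \<circ> x ^^ Suc m) \<circ> z ^^ Suc m)"
    by (rule feq_R[OF drz_pow_left[OF y] clin_pow[OF cz]]) (simp add: m_def)
  also have "(y \<circ> x ^^ Suc m) \<circ> z ^^ Suc m = (y \<circ> x) \<circ> (x ^^ m \<circ> z ^^ Suc m)"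
    by (simp add: o_assoc)
  also have "feq \<dots> ((y \<circ> x) \<circ> z)"
    by (rule feq_L[OF feq_sym[OF drz_right[OF z]] clin_o[OF cy cx]])
  finally have 2: "feq z (y \<circ> x \<circ> z)" .
  show ?thesis using 1 feq_sym[OF 2] by (rule feq_trans)
qed




lemma disj_span:
  assumes "cv.independent B" "X \<subseteq> B" "Y \<subseteq> B" "X \<inter> Y = {}" "w \<in> cv.span X" "w \<in> cv.span Y"
  shows "w = 0"
proof -
  have rX: "cv.representation B w = cv.representation X w"
    using assms by (intro cv.representation_extend) auto
  have rY: "cv.representation B w = cv.representation Y w"
    using assms by (intro cv.representation_extend) auto
  have z: "cv.representation B w b = 0" for b
    using cv.representation_ne_zero[of X w b] cv.representation_ne_zero[of Y w b] rX rY assms(4)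
    by (metis disjoint_iff)
  have "w \<in> cv.span B" using assms(2,5) cv.span_mono by blast
  then have "w = (\<Sum>b | cv.representation B w b \<noteq> 0. cv.representation B w b *\<^sub>C b)"
    using cv.sum_nonzero_representation_eq[OF assms(1)] by simp
  also have "\<dots> = 0" by (simp add: z)
  finally show ?thesis .
qed

lemma clin_construct: "cv.independent B \<Longrightarrow> clin (cvp.construct B f)"
  by (simp add: clin_linear cvp.linear_construct)

definition pj :: "'a::complex_normed_vector set \<Rightarrow> 'a set \<Rightarrow> 'a \<Rightarrow> 'a" where
  "pj B E = cvp.construct B (\<lambda>b. if b \<in> E then b else 0)"

lemma pj_formula:
  assumes B: "cv.independent B" and E: "E \<subseteq> B" "finite E"
  shows "pj B E x = (\<Sum>e\<in>E. cv.representation (cv.extend_basis B) x e *\<^sub>C e)"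
proof -
  let ?X = "cv.extend_basis B"
  have iX: "cv.independent ?X" using cv.independent_extend_basis[OF B] .
  have BX: "B \<subseteq> ?X" using cv.extend_basis_superset[OF B] .
  have lin1: "Vector_Spaces.linear scaleC scaleC (pj B E)"
    unfolding pj_def by (rule cvp.linear_construct[OF B])
  have lin2: "Vector_Spaces.linear scaleC scaleC (\<lambda>x. \<Sum>e\<in>E. cv.representation ?X x e *\<^sub>C e)"
    unfolding clin_linear[symmetric] clin_def using iX cv.span_extend_basis[OF B]
    by (auto simp: cv.representation_add cv.representation_scale sum.distrib cv.scale_left_distrib
        cv.scale_sum_right)
  show ?thesis
  proof (rule cvp.linear_eq_on[OF lin1 lin2])
    show "x \<in> cv.span ?X" using cv.span_extend_basis[OF B] by simp
  next
    fix b assume b: "b \<in> ?X"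
    have rb: "cv.representation ?X b = (\<lambda>v. if v = b then 1 else 0)"
      by (rule cv.representation_basis[OF iX b])
    have rhs: "(\<Sum>e\<in>E. cv.representation ?X b e *\<^sub>C e) = (if b \<in> E then b else 0)"
      unfolding rb using E(2) by (simp add: if_distrib[of "\<lambda>c. c *\<^sub>C _"] sum.delta cong: if_cong)
    show "pj B E b = (\<Sum>e\<in>E. cv.representation ?X b e *\<^sub>C e)"
    proof (cases "b \<in> B")
      case True then show ?thesis unfolding rhs pj_def by (simp add: cvp.construct_basis[OF B])
    next
      case False
      then have "b \<in> cv.span (?X - B)" using b by (intro cv.span_base) auto
      then have "pj B E b = 0" unfolding pj_def by (rule cvp.construct_outside[OF B])
      then show ?thesis unfolding rhs using False E(1) by auto
    qed
  qed
qed

lemma pj_clin: "cv.independent B \<Longrightarrow> clin (pj B E)"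
  unfolding pj_def by (rule clin_construct)

lemma pj_range: assumes "cv.independent B" "E \<subseteq> B" "finite E" shows "pj B E x \<in> cv.span E"
  unfolding pj_formula[OF assms] by (intro cv.span_sum cv.span_scale cv.span_base) auto

lemma pj_afr: assumes "cv.independent B" "E \<subseteq> B" "finite E" shows "afr (pj B E)"
  unfolding afr_def using pj_clin[OF assms(1)] pj_range[OF assms] assms(3) by blast

lemma pj_id: assumes B: "cv.independent B" "E \<subseteq> B" and x: "x \<in> cv.span E" shows "pj B E x = x"
proof (rule cvp.linear_eq_on[OF _ _ x])
  show "Vector_Spaces.linear scaleC scaleC (pj B E)" using pj_clin[OF B(1)] by (simp add: clin_linear)
  show "Vector_Spaces.linear scaleC scaleC (\<lambda>x. x)" using clin_id by (simp add: clin_linear)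
  fix b assume "b \<in> E" then show "pj B E b = b" using B unfolding pj_def
    by (subst cvp.construct_basis) auto
qed

lemma pj_zero: assumes B: "cv.independent B" and x: "x \<in> cv.span (B - E)" shows "pj B E x = 0"
proof (rule cvp.linear_eq_on[OF _ _ x])
  show "Vector_Spaces.linear scaleC scaleC (pj B E)" using pj_clin[OF B(1)] by (simp add: clin_linear)
  show "Vector_Spaces.linear scaleC scaleC (\<lambda>x::'a. 0::'a)"
    by (rule cvp.linear_zero)
  fix b assume "b \<in> B - E" then show "pj B E b = 0" using B unfolding pj_def
    by (subst cvp.construct_basis) auto
qed

lemma pj_trace: assumes B: "cv.independent B" and E: "E \<subseteq> B" "finite E" shows "atr (pj B E) = of_nat (card E)"
proof -
  let ?X = "cv.extend_basis B"
  have iX: "cv.independent ?X" using cv.independent_extend_basis[OF B] .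
  have BX: "B \<subseteq> ?X" using cv.extend_basis_superset[OF B] .
  obtain h where h: "bij_betw h {..<card E} E"
    using ex_bij_betw_nat_finite[OF E(2)] by (auto simp: atLeast0LessThan)
  have r: "frep (pj B E) (card E) h (\<lambda>i x. cv.representation ?X x (h i))"
    unfolding frep_def
  proof safe
    fix i show "cfun (\<lambda>x. cv.representation ?X x (h i))"
      unfolding cfun_def using iX cv.span_extend_basis[OF B]
      by (auto simp: cv.representation_add cv.representation_scale)
  next
    fix x
    show "pj B E x = (\<Sum>i<card E. cv.representation ?X x (h i) *\<^sub>C h i)"
      unfolding pj_formula[OF B E]
      using sum.reindex_bij_betw[OF h, of "\<lambda>e. cv.representation ?X x e *\<^sub>C e"] by simp
  qed
  have "atr (pj B E) = (\<Sum>i<card E. cv.representation ?X (h i) (h i))" by (rule atr_eq[OF r])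
  also have "\<dots> = (\<Sum>i<card E. 1)"
  proof (rule sum.cong)
    fix i assume "i \<in> {..<card E}"
    then have "h i \<in> ?X" using h E BX by (auto simp: bij_betw_def)
    then show "cv.representation ?X (h i) (h i) = 1" by (simp add: cv.representation_basis[OF iX])
  qed simp
  finally show ?thesis by simp
qed




lemma main_alg:
  fixes T :: "'a::complex_normed_vector \<Rightarrow> 'a" and M :: "'a set"
  assumes cT: "clin T" and Mdef: "M = range (T ^^ n)" and TM: "T ` M \<subseteq> M"
    and BK: "finite BK" "cv.span BK = {x\<in>M. T x = 0}"
    and C: "finite C" "M = {r + c |r c. r \<in> T ` M \<and> c \<in> cv.span C}"
  shows "\<exists>S0 k. drz T S0 k \<and> atr (\<lambda>x. T (S0 x) - S0 (T x)) = of_int (index_on M T)"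
proof -
  have "range (T ^^ n) = cv.span (range (T ^^ n))"
    using clin_span_image[OF clin_pow[OF cT], where B=UNIV] by simp
  then have subM: "cv.subspace M" unfolding Mdef by (metis cv.subspace_span)
  then have spM: "cv.span M = M" by simp
  define K where "K = {x\<in>M. T x = 0}"
  have KM: "K \<subseteq> M" by (auto simp: K_def)
  obtain Bk where Bk: "Bk \<subseteq> K" "cv.independent Bk" "K \<subseteq> cv.span Bk"
    using cv.maximal_independent_subset by blast
  have spK: "cv.span K = K" using BK(2) unfolding K_def[symmetric] by (metis cv.span_span)
  have spBk: "cv.span Bk = K"
    using Bk cv.span_mono[OF Bk(1)] spK by auto
  have finBk: "finite Bk"
    using cv.independent_span_bound[OF BK(1) Bk(2)] Bk(1) BK(2) unfolding K_def by auto
  obtain B where B: "Bk \<subseteq> B" "B \<subseteq> M" "cv.independent B" "M \<subseteq> cv.span B"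
    using cv.maximal_independent_subset_extend[of Bk M] Bk KM by blast
  have spB: "cv.span B = M" using B cv.span_mono[OF B(2)] spM by auto
  define Bw where "Bw = B - Bk"
  have BUn: "B = Bk \<union> Bw" using B(1) by (auto simp: Bw_def)
  have indBw: "cv.independent Bw" using cv.independent_mono[OF B(3), of Bw] by (auto simp: Bw_def)
  have spBw_M: "cv.span Bw \<subseteq> M" using spB cv.span_mono[of Bw B] by (auto simp: Bw_def)
  have spBk_M: "cv.span Bk \<subseteq> M" using spBk KM by simp
  have injT: "inj_on T (cv.span Bw)"
  proof -
    have "\<forall>x\<in>cv.span Bw. T x = 0 \<longrightarrow> x = 0"
    proof safe
      fix x assume x: "x \<in> cv.span Bw" "T x = 0"
      then have "x \<in> cv.span Bk" using spBw_M spBk by (auto simp: K_def)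
      then show "x = 0" using disj_span[OF B(3) B(1) _ _ _ x(1)] by (auto simp: Bw_def)
    qed
    then show ?thesis
      using module_hom.inj_on_iff_eq_0[OF clin_mhom[OF cT] cv.subspace_span] by blast
  qed
  obtain G0 where G0: "G0 ` UNIV \<subseteq> cv.span Bw" "Vector_Spaces.linear scaleC scaleC G0"
      "\<And>v. v \<in> cv.span Bw \<Longrightarrow> G0 (T v) = v"
    using cvp.linear_exists_left_inverse_on[OF clin_linear[THEN iffD1, OF cT] cv.subspace_span injT]
    by blast
  have cG0: "clin G0" using G0(2) by (simp add: clin_linear)
  define A where "A = T ` Bw"
  have indA: "cv.independent A"
    unfolding A_def by (rule module_hom.independent_injective_image[OF clin_mhom[OF cT] indBw injT])
  have spA: "cv.span A = T ` cv.span Bw" unfolding A_def by (rule clin_span_image[OF cT, symmetric])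
  have RA: "T ` M = cv.span A"
  proof -
    have "T ` M = cv.span (T ` B)" using clin_span_image[OF cT, where B=B] spB by simp
    moreover have "T ` B \<subseteq> cv.span A"
    proof
      fix y assume "y \<in> T ` B"
      then obtain b where b: "b \<in> B" "y = T b" by blast
      show "y \<in> cv.span A"
      proof (cases "b \<in> Bk")
        case True then have "T b = 0" using Bk(1) by (auto simp: K_def)
        then show ?thesis using b cv.span_zero by simp
      next
        case False then show ?thesis using b by (auto simp: A_def Bw_def intro: cv.span_base)
      qed
    qed
    moreover have "A \<subseteq> T ` B" by (auto simp: A_def Bw_def)
    ultimately show ?thesis
      using cv.span_minimal[of "T ` B" "cv.span A"] cv.span_mono[of A "T ` B"] by auto
  qed
  have zM: "0 \<in> M" using subM cv.subspace_0 by blast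
  have CM: "cv.span C \<subseteq> M"
  proof
    fix c assume "c \<in> cv.span C"
    moreover have "T 0 = 0" using clin_0[OF cT] .
    ultimately have "c = 0 + c \<and> 0 \<in> T ` M \<and> c \<in> cv.span C" using zM
      by (auto intro!: image_eqI[of 0])
    then have "c \<in> {r + c |r c. r \<in> T ` M \<and> c \<in> cv.span C}" by blast
    then show "c \<in> M" using C(2) by simp
  qed
  have AM: "A \<subseteq> M" using RA TM cv.span_superset[of A] by auto
  obtain B' where B': "A \<subseteq> B'" "B' \<subseteq> A \<union> C" "cv.independent B'" "A \<union> C \<subseteq> cv.span B'"
    using cv.maximal_independent_subset_extend[of A "A \<union> C"] indA by blast
  define D where "D = B' - A"
  have "D \<subseteq> C" using B'(2) by (auto simp: D_def)
  then have finD: "finite D" using C(1) finite_subset by blast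
  have B'Un: "B' = A \<union> D" using B'(1) by (auto simp: D_def)
  have DB': "D \<subseteq> B'" by (auto simp: D_def)
  have spB': "cv.span B' = M"
  proof
    have "B' \<subseteq> M" using B'(2) AM CM cv.span_superset[of C] by auto
    then show "cv.span B' \<subseteq> M" using cv.span_minimal[OF _ subM] by blast
  next
    show "M \<subseteq> cv.span B'"
    proof
      fix x assume "x \<in> M"
      then obtain r c where rc: "x = r + c" "r \<in> T ` M" "c \<in> cv.span C" using C(2) by blast
      have "r \<in> cv.span B'" using rc(2) RA B'(1) cv.span_mono by blast
      moreover have "cv.span C \<subseteq> cv.span B'"
        using B'(4) cv.span_minimal[of C "cv.span B'"] by auto
      ultimately show "x \<in> cv.span B'" using rc cv.span_add by blast
    qed
  qed
  have spD_M: "cv.span D \<subseteq> M" using spB' cv.span_mono[OF DB'] by simp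
  define P where "P = pj B Bk"
  define Q where "Q = pj B' D"
  have cP: "clin P" unfolding P_def by (rule pj_clin[OF B(3)])
  have cQ: "clin Q" unfolding Q_def by (rule pj_clin[OF B'(3)])
  have afrP: "afr P" unfolding P_def by (rule pj_afr[OF B(3) B(1) finBk])
  have afrQ: "afr Q" unfolding Q_def by (rule pj_afr[OF B'(3) DB' finD])
  have PM: "P x \<in> M" for x unfolding P_def using pj_range[OF B(3) B(1) finBk] spBk_M by blast
  have QM: "Q x \<in> M" for x unfolding Q_def using pj_range[OF B'(3) DB' finD] spD_M by blast
  have QA: "Q y = 0" if "y \<in> cv.span A" for y
  proof -
    have "B' - D = A" using B'(1) by (auto simp: D_def)
    then show ?thesis unfolding Q_def using pj_zero[OF B'(3), of y D] that by simp
  qed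
  have QD: "Q y = y" if "y \<in> cv.span D" for y
    unfolding Q_def by (rule pj_id[OF B'(3) DB' that])
  have PBk: "P y = y" if "y \<in> cv.span Bk" for y
    unfolding P_def by (rule pj_id[OF B(3) B(1) that])
  have PBw: "P y = 0" if "y \<in> cv.span Bw" for y
    unfolding P_def by (rule pj_zero[OF B(3)]) (use that in \<open>simp add: Bw_def\<close>)
  define G where "G = (\<lambda>y. G0 (y - Q y))"
  have cG: "clin G" unfolding G_def by (rule clin_comp[OF cG0 clin_diff2[OF clin_id cQ]])
  have GM: "G y \<in> M" for y using G0(1) spBw_M by (auto simp: G_def)
  have GT: "G (T x) = x - P x" if "x \<in> M" for x
  proof -
    have "x \<in> cv.span (Bk \<union> Bw)" using that spB BUn by simp
    then obtain k w where kw: "x = k + w" "k \<in> cv.span Bk" "w \<in> cv.span Bw"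
      unfolding cv.span_Un by blast
    have Tk: "T k = 0" using kw(2) spBk by (auto simp: K_def)
    have Px: "P x = k" using kw PBk PBw clin_add[OF cP] by simp
    have Tx: "T x = T w" using kw Tk clin_add[OF cT] by simp
    have "T w \<in> cv.span A" using spA kw(3) by blast
    then have "Q (T w) = 0" by (rule QA)
    then have "G (T x) = w" using Tx G0(3)[OF kw(3)] by (simp add: G_def)
    then show ?thesis using Px kw(1) by simp
  qed
  have TG: "T (G y) = y - Q y" if "y \<in> M" for y
  proof -
    have "y \<in> cv.span (A \<union> D)" using that spB' B'Un by simp
    then obtain a d where ad: "y = a + d" "a \<in> cv.span A" "d \<in> cv.span D"
      unfolding cv.span_Un by blast
    have Qy: "Q y = d" using ad QA QD clin_add[OF cQ] by simp
    obtain w where w: "w \<in> cv.span Bw" "a = T w" using ad(2) spA by blast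
    have "G y = w" using Qy ad w G0(3) by (simp add: G_def)
    then show ?thesis using w Qy ad by simp
  qed

  have cPow: "clin (T ^^ j)" for j by (rule clin_pow[OF cT])
  have cGow: "clin (G ^^ j)" for j by (rule clin_pow[OF cG])
  have TpowM: "(T ^^ j) x \<in> M" if "x \<in> M" for j x
    using that by (induction j) (use TM in auto)
  have GpowM: "(G ^^ j) y \<in> M" if "y \<in> M" for j y
    using that by (induction j) (use GM in auto)
  have GT_pow: "(G ^^ j) ((T ^^ j) x) = x - (\<Sum>i<j. (G ^^ i) (P ((T ^^ i) x)))" if "x \<in> M" for j x
  proof (induction j)
    case 0 then show ?case by simp
  next
    case (Suc j)
    have "(G ^^ Suc j) ((T ^^ Suc j) x) = (G ^^ j) (G (T ((T ^^ j) x)))"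
      by (simp add: funpow_swap1)
    also have "\<dots> = (G ^^ j) ((T ^^ j) x - P ((T ^^ j) x))" using GT[OF TpowM[OF that]] by simp
    also have "\<dots> = (G ^^ j) ((T ^^ j) x) - (G ^^ j) (P ((T ^^ j) x))" by (rule clin_diff[OF cGow])
    finally show ?case using Suc by simp
  qed
  have TG_pow: "(T ^^ j) ((G ^^ j) y) = y - (\<Sum>i<j. (T ^^ i) (Q ((G ^^ i) y)))" if "y \<in> M" for j y
  proof (induction j)
    case 0 then show ?case by simp
  next
    case (Suc j)
    have "(T ^^ Suc j) ((G ^^ Suc j) y) = (T ^^ j) (T (G ((G ^^ j) y)))"
      by (simp add: funpow_swap1)
    also have "\<dots> = (T ^^ j) ((G ^^ j) y - Q ((G ^^ j) y))" using TG[OF GpowM[OF that]] by simp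
    also have "\<dots> = (T ^^ j) ((G ^^ j) y) - (T ^^ j) (Q ((G ^^ j) y))" by (rule clin_diff[OF cPow])
    finally show ?case using Suc by simp
  qed
  have TnM: "(T ^^ n) x \<in> M" for x using Mdef by simp
  define S0 where "S0 = G ^^ Suc n \<circ> T ^^ n"
  have cS0: "clin S0" unfolding S0_def by (rule clin_o[OF cGow cPow])
  define Z1 where "Z1 = (\<lambda>x. (G ^^ n) (P ((T ^^ n) x)))"
  define Z2 where "Z2 = (\<lambda>x. Q ((G ^^ n) ((T ^^ n) x)))"
  have Zf: "T (S0 x) - S0 (T x) = Z1 x - Z2 x" for x
  proof -
    have "T (S0 x) = T (G ((G ^^ n) ((T ^^ n) x)))" by (simp add: S0_def)
    also have "\<dots> = (G ^^ n) ((T ^^ n) x) - Q ((G ^^ n) ((T ^^ n) x))"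
      by (rule TG[OF GpowM[OF TnM]])
    finally have 1: "T (S0 x) = (G ^^ n) ((T ^^ n) x) - Q ((G ^^ n) ((T ^^ n) x))" .
    have "S0 (T x) = (G ^^ n) (G (T ((T ^^ n) x)))" by (simp add: S0_def funpow_swap1)
    also have "\<dots> = (G ^^ n) ((T ^^ n) x - P ((T ^^ n) x))" using GT[OF TnM] by simp
    also have "\<dots> = (G ^^ n) ((T ^^ n) x) - (G ^^ n) (P ((T ^^ n) x))" by (rule clin_diff[OF cGow])
    finally have 2: "S0 (T x) = (G ^^ n) ((T ^^ n) x) - (G ^^ n) (P ((T ^^ n) x))" .
    show ?thesis unfolding 1 2 Z1_def Z2_def by simp
  qed
  have afrZ1: "afr Z1" unfolding Z1_def by (intro afr_compL[OF afr_compR[OF afrP cPow] cGow])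
  have afrZ2: "afr Z2" unfolding Z2_def by (intro afr_compR[OF afrQ] clin_comp[OF cGow cPow])
  have D1: "feq (T \<circ> S0) (S0 \<circ> T)"
  proof -
    have "(\<lambda>x. (T \<circ> S0) x - (S0 \<circ> T) x) = (\<lambda>x. Z1 x - Z2 x)" using Zf by (simp add: comp_def)
    then show ?thesis unfolding feq_def using afr_diff[OF afrZ1 afrZ2] by simp
  qed
  define W where "W = (\<lambda>y. \<Sum>i<Suc n. (T ^^ i) (Q ((G ^^ i) y)))"
  have afrW: "afr W" unfolding W_def
    by (intro afr_sum afr_compL[OF afr_compR[OF afrQ cGow] cPow])
  have cW: "clin W" using afrW by (simp add: afr_def)
  have D2: "feq (S0 \<circ> T \<circ> S0) S0"
  proof -
    have "S0 (T (S0 x)) - S0 x = - (G ^^ Suc n) (W ((T ^^ n) x))" for x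
    proof -
      have "S0 (T (S0 x)) = (G ^^ Suc n) ((T ^^ Suc n) ((G ^^ Suc n) ((T ^^ n) x)))"
        by (simp add: S0_def funpow_swap1)
      also have "\<dots> = (G ^^ Suc n) ((T ^^ n) x - W ((T ^^ n) x))"
        unfolding W_def by (subst TG_pow[OF TnM]) simp
      also have "\<dots> = S0 x - (G ^^ Suc n) (W ((T ^^ n) x))"
        by (simp add: clin_diff[OF cGow] clin_diff[OF cG] S0_def)
      finally show ?thesis by simp
    qed
    then have "(\<lambda>x. (S0 \<circ> T \<circ> S0) x - S0 x) = (\<lambda>x. - (G ^^ Suc n) (W ((T ^^ n) x)))"
      by (simp add: comp_def)
    moreover have "afr (\<lambda>x. - (G ^^ Suc n) (W ((T ^^ n) x)))"
      by (intro afr_neg afr_compL[OF afr_compR[OF afrW cPow] cGow])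
    ultimately show ?thesis unfolding feq_def by simp
  qed
  have D3: "feq (T ^^ Suc n \<circ> S0 \<circ> T) (T ^^ Suc n)"
  proof -
    have "(T ^^ Suc n) (S0 (T x)) - (T ^^ Suc n) x = - W ((T ^^ Suc n) x)" for x
    proof -
      have "(T ^^ Suc n) (S0 (T x)) = (T ^^ Suc n) ((G ^^ Suc n) ((T ^^ Suc n) x))"
        by (simp add: S0_def funpow_swap1)
      also have "\<dots> = (T ^^ Suc n) x - W ((T ^^ Suc n) x)"
      proof -
        have "(T ^^ Suc n) x \<in> M" using TM TnM[of x] by auto
        then show ?thesis unfolding W_def by (rule TG_pow)
      qed
      finally show ?thesis by simp
    qed
    then have "(\<lambda>x. (T ^^ Suc n \<circ> S0 \<circ> T) x - (T ^^ Suc n) x) = (\<lambda>x. - W ((T ^^ Suc n) x))"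
      by (simp add: comp_def)
    moreover have "afr (\<lambda>x. - W ((T ^^ Suc n) x))"
      by (intro afr_neg afr_compR[OF afrW cPow])
    ultimately show ?thesis unfolding feq_def by simp
  qed
  have drz0: "drz T S0 (Suc n)" unfolding drz_def using cT cS0 D1 D2 D3 by simp

  have cL: "clin (\<lambda>x. (G ^^ n) ((T ^^ n) x))" by (rule clin_comp[OF cGow cPow])
  have afrR1: "afr (\<lambda>x. (G ^^ i) (P ((T ^^ i) (Q x))))" for i
    by (intro afr_compL[OF afr_compR[OF afr_compR[OF afrP cPow] cQ] cGow])
  have afrR2: "afr (\<lambda>x. (T ^^ i) (Q ((G ^^ i) (P x))))" for i
    by (intro afr_compL[OF afr_compR[OF afr_compR[OF afrQ cGow] cP] cPow])
  have t2: "atr Z2 = atr Q - (\<Sum>i<n. atr (\<lambda>x. (G ^^ i) (P ((T ^^ i) (Q x)))))"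
  proof -
    have "atr Z2 = atr (\<lambda>x. (G ^^ n) ((T ^^ n) (Q x)))"
      unfolding Z2_def using atr_cyclic[OF afrQ cL] by simp
    also have "(\<lambda>x. (G ^^ n) ((T ^^ n) (Q x))) = (\<lambda>x. Q x - (\<Sum>i<n. (G ^^ i) (P ((T ^^ i) (Q x)))))"
      using GT_pow[OF QM] by simp
    also have "atr \<dots> = atr Q - atr (\<lambda>x. \<Sum>i<n. (G ^^ i) (P ((T ^^ i) (Q x))))"
      by (rule atr_diff[OF afrQ afr_sum[OF afrR1]])
    also have "atr (\<lambda>x. \<Sum>i<n. (G ^^ i) (P ((T ^^ i) (Q x)))) = (\<Sum>i<n. atr (\<lambda>x. (G ^^ i) (P ((T ^^ i) (Q x)))))"
      by (rule atr_sum[OF _ afrR1]) simp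
    finally show ?thesis .
  qed
  have t1: "atr Z1 = atr P - (\<Sum>i<n. atr (\<lambda>x. (T ^^ i) (Q ((G ^^ i) (P x)))))"
  proof -
    have afF: "afr (\<lambda>x. (G ^^ n) (P x))" by (rule afr_compL[OF afrP cGow])
    have "atr Z1 = atr (\<lambda>x. (T ^^ n) ((G ^^ n) (P x)))"
      unfolding Z1_def using atr_cyclic[OF afF cPow] by simp
    also have "(\<lambda>x. (T ^^ n) ((G ^^ n) (P x))) = (\<lambda>x. P x - (\<Sum>i<n. (T ^^ i) (Q ((G ^^ i) (P x)))))"
      using TG_pow[OF PM] by simp
    also have "atr \<dots> = atr P - atr (\<lambda>x. \<Sum>i<n. (T ^^ i) (Q ((G ^^ i) (P x))))"
      by (rule atr_diff[OF afrP afr_sum[OF afrR2]])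
    also have "atr (\<lambda>x. \<Sum>i<n. (T ^^ i) (Q ((G ^^ i) (P x)))) = (\<Sum>i<n. atr (\<lambda>x. (T ^^ i) (Q ((G ^^ i) (P x)))))"
      by (rule atr_sum[OF _ afrR2]) simp
    finally show ?thesis .
  qed
  have t3: "atr (\<lambda>x. (G ^^ i) (P ((T ^^ i) (Q x)))) = atr (\<lambda>x. (T ^^ i) (Q ((G ^^ i) (P x))))" for i
    using atr_cyclic[OF afr_compL[OF afrP cGow] clin_comp[OF cPow cQ]] by simp
  have trZ: "atr (\<lambda>x. T (S0 x) - S0 (T x)) = atr P - atr Q"
  proof -
    have "atr (\<lambda>x. T (S0 x) - S0 (T x)) = atr (\<lambda>x. Z1 x - Z2 x)" using Zf by simp
    also have "\<dots> = atr Z1 - atr Z2" by (rule atr_diff[OF afrZ1 afrZ2])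
    finally show ?thesis using t1 t2 t3 by simp
  qed
  have trP: "atr P = of_nat (card Bk)" unfolding P_def by (rule pj_trace[OF B(3) B(1) finBk])
  have trQ: "atr Q = of_nat (card D)" unfolding Q_def by (rule pj_trace[OF B'(3) DB' finD])
  have cdimK: "cdim K = card Bk"
    unfolding cdim_eq using cv.dim_eq_card[of Bk K] spBk spK Bk(2) by simp
  have codimD: "codim_in M (T ` M) = card D"
    unfolding codim_in_def cspan_eq
  proof (rule Least_equality)
    have "M = {r + c |r c. r \<in> T ` M \<and> c \<in> cv.span D}"
      using spB' B'Un cv.span_Un[of A D] RA by simp
    then show "\<exists>C. finite C \<and> card C = card D \<and> M = {r + c |r c. r \<in> T ` M \<and> c \<in> cv.span C}"
      using finD by blast
  next
    fix y assume "\<exists>C. finite C \<and> card C = y \<and> M = {r + c |r c. r \<in> T ` M \<and> c \<in> cv.span C}"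
    then obtain C'' where C'': "finite C''" "card C'' = y" "M = {r + c |r c. r \<in> T ` M \<and> c \<in> cv.span C''}"
      by blast
    have "D \<subseteq> cv.span (Q ` C'')"
    proof
      fix d assume d: "d \<in> D"
      then have "d \<in> M" using spD_M cv.span_base by blast
      then obtain r c where rc: "d = r + c" "r \<in> T ` M" "c \<in> cv.span C''" using C''(3) by blast
      have "d = Q d" using QD[OF cv.span_base[OF d]] by simp
      also have "\<dots> = Q r + Q c" using rc clin_add[OF cQ] by simp
      also have "Q r = 0" using QA rc(2) RA by blast
      finally have "d = Q c" by simp
      moreover have "Q c \<in> cv.span (Q ` C'')" using clin_span_image[OF cQ, where B=C''] rc(3) by blast
      ultimately show "d \<in> cv.span (Q ` C'')" by simp
    qed
    moreover have "cv.independent D" using cv.independent_mono[OF B'(3) DB'] .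
    ultimately have "card D \<le> card (Q ` C'')"
      using cv.independent_span_bound[of "Q ` C''" D] C''(1) by simp
    also have "\<dots> \<le> card C''" by (rule card_image_le[OF C''(1)])
    finally show "card D \<le> y" using C''(2) by simp
  qed
  have idx: "index_on M T = int (card Bk) - int (card D)"
    unfolding index_on_def using cdimK codimD by (simp add: K_def)
  show ?thesis
    using drz0 trZ trP trQ idx by (intro exI[of _ S0] exI[of _ "Suc n"]) simp
qed



lemma scaleC_diff_left: "(a - b) *\<^sub>C x = a *\<^sub>C x - b *\<^sub>C (x::'a::complex_normed_vector)"
  by (rule cv.scale_left_diff_distrib)

lemma bl_scaleC_left: "bounded_linear (\<lambda>k::complex. k *\<^sub>C (a::'a::complex_normed_vector))"
proof (rule bounded_linear_intro[where K="norm a"])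
  show "(x + y) *\<^sub>C a = x *\<^sub>C a + y *\<^sub>C a" for x y by (rule scaleC_add_left)
  show "(r *\<^sub>R x) *\<^sub>C a = r *\<^sub>R (x *\<^sub>C a)" for r x
  proof -
    have "(r *\<^sub>R x) *\<^sub>C a = (of_real r * x) *\<^sub>C a" by (simp add: scaleR_conv_of_real)
    also have "\<dots> = of_real r *\<^sub>C (x *\<^sub>C a)" by (rule scaleC_scaleC[symmetric])
    also have "\<dots> = r *\<^sub>R (x *\<^sub>C a)" by (rule scaleC_of_real)
    finally show ?thesis .
  qed
  show "norm (x *\<^sub>C a) \<le> norm x * norm a" for x by (simp add: norm_scaleC)
qed

lemma key_ineq:
  fixes a :: "'a::complex_normed_vector"
  assumes u: "u \<in> cv.span E"
  shows "cmod c * infdist a (cv.span E) \<le> norm (u + c *\<^sub>C a)"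
proof (cases "c = 0")
  case True then show ?thesis by simp
next
  case False
  let ?u' = "- ((1 / c) *\<^sub>C u)"
  have u': "?u' \<in> cv.span E" using u by (intro cv.span_neg cv.span_scale)
  have "infdist a (cv.span E) \<le> dist a ?u'" by (rule infdist_le[OF u'])
  also have "\<dots> = norm (a + (1 / c) *\<^sub>C u)" by (simp add: dist_norm)
  finally have 1: "infdist a (cv.span E) \<le> norm (a + (1 / c) *\<^sub>C u)" .
  have "u + c *\<^sub>C a = c *\<^sub>C (a + (1 / c) *\<^sub>C u)"
    using False by (simp add: scaleC_add_right scaleC_scaleC)
  then have "norm (u + c *\<^sub>C a) = cmod c * norm (a + (1 / c) *\<^sub>C u)" by (simp add: norm_scaleC)
  then show ?thesis using 1 by (simp add: mult_left_mono)
qed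

lemma fin_indep_bound:
  fixes E :: "'a::complex_normed_vector set"
  assumes "finite E" "cv.independent E"
  shows "closed (cv.span E) \<and> (\<exists>K\<ge>0. \<forall>c. \<forall>e\<in>E. cmod (c e) \<le> K * norm (\<Sum>e\<in>E. c e *\<^sub>C e))"
  using assms
proof (induction E rule: finite_induct)
  case empty
  have "cv.span {} = {0::'a}" by (simp add: cv.span_empty)
  then show ?case by auto
next
  case (insert a E)
  have indE: "cv.independent E" and aE: "a \<notin> cv.span E"
    using insert.prems insert.hyps(2) by (auto simp: cv.independent_insert)
  obtain K where K: "K \<ge> 0" "\<And>c e. e \<in> E \<Longrightarrow> cmod (c e) \<le> K * norm (\<Sum>e\<in>E. c e *\<^sub>C e)"
    and clE: "closed (cv.span E)" using insert.IH[OF indE] by blast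
  define d where "d = infdist a (cv.span E)"
  have ne: "cv.span E \<noteq> {}" using cv.span_zero by blast
  have "d \<noteq> 0" using aE in_closed_iff_infdist_zero[OF clE ne] by (simp add: d_def)
  moreover have "d \<ge> 0" by (simp add: d_def infdist_nonneg)
  ultimately have dpos: "d > 0" by simp
  have key: "cmod c * d \<le> norm (u + c *\<^sub>C a)" if "u \<in> cv.span E" for u c
    using key_ineq[OF that] by (simp add: d_def)
  have bound: "\<forall>c. \<forall>e\<in>insert a E. cmod (c e) \<le> max (1 / d) (K * (1 + norm a / d)) * norm (\<Sum>e\<in>insert a E. c e *\<^sub>C e)"
  proof (intro allI ballI)
    fix c e assume e: "e \<in> insert a E"
    define u where "u = (\<Sum>e\<in>E. c e *\<^sub>C e)"
    have uE: "u \<in> cv.span E" unfolding u_def by (intro cv.span_sum cv.span_scale cv.span_base)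
    define w where "w = (\<Sum>e\<in>insert a E. c e *\<^sub>C e)"
    have w: "w = u + c a *\<^sub>C a" using insert.hyps by (simp add: w_def u_def add.commute)
    have ca: "cmod (c a) \<le> norm w / d" using key[OF uE, of "c a"] dpos w by (simp add: field_simps)
    have nu: "norm u \<le> norm w * (1 + norm a / d)"
    proof -
      have "norm u = norm (w - c a *\<^sub>C a)" using w by simp
      also have "\<dots> \<le> norm w + cmod (c a) * norm a" using norm_triangle_ineq4[of w "c a *\<^sub>C a"]
        by (simp add: norm_scaleC)
      also have "\<dots> \<le> norm w + norm w / d * norm a" using mult_right_mono[OF ca norm_ge_zero[of a]] by simp
      finally show ?thesis by (simp add: field_simps)
    qed
    have M1: "1 / d \<le> max (1 / d) (K * (1 + norm a / d))" by simp
    have M2: "K * (1 + norm a / d) \<le> max (1 / d) (K * (1 + norm a / d))" by simp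
    show "cmod (c e) \<le> max (1 / d) (K * (1 + norm a / d)) * norm w"
    proof (cases "e = a")
      case True
      have "cmod (c e) \<le> 1 / d * norm w" using ca True by simp
      also have "\<dots> \<le> max (1 / d) (K * (1 + norm a / d)) * norm w" by (rule mult_right_mono[OF M1]) simp
      finally show ?thesis .
    next
      case False
      then have eE: "e \<in> E" using e by simp
      have "cmod (c e) \<le> K * norm u" using K(2)[OF eE, of c] by (simp add: u_def)
      also have "\<dots> \<le> K * (norm w * (1 + norm a / d))" by (rule mult_left_mono[OF nu K(1)])
      also have "\<dots> = (K * (1 + norm a / d)) * norm w" by simp
      also have "\<dots> \<le> max (1 / d) (K * (1 + norm a / d)) * norm w" by (rule mult_right_mono[OF M2]) simp
      finally show ?thesis .
    qed
  qed
  have closed: "closed (cv.span (insert a E))"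
    unfolding closed_sequential_limits
  proof (intro allI impI, elim conjE)
    fix x l assume xS: "\<forall>n. x n \<in> cv.span (insert a E)" and xl: "x \<longlonglongrightarrow> l"
    have "\<forall>n. \<exists>k. x n - k *\<^sub>C a \<in> cv.span E" using xS by (simp add: cv.span_insert)
    then obtain kf where kf: "\<And>n. x n - kf n *\<^sub>C a \<in> cv.span E" by metis
    have dk: "cmod (kf i - kf j) * d \<le> dist (x i) (x j)" for i j
    proof -
      have eq: "x i - x j = (x i - kf i *\<^sub>C a - (x j - kf j *\<^sub>C a)) + (kf i - kf j) *\<^sub>C a"
        by (simp add: scaleC_diff_left)
      have mem: "x i - kf i *\<^sub>C a - (x j - kf j *\<^sub>C a) \<in> cv.span E" by (rule cv.span_diff[OF kf kf])
      have "cmod (kf i - kf j) * d \<le> norm (x i - kf i *\<^sub>C a - (x j - kf j *\<^sub>C a) + (kf i - kf j) *\<^sub>C a)"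
        by (rule key[OF mem])
      then show ?thesis using eq by (simp only: dist_norm)
    qed
    have "Cauchy x" using xl by (rule LIMSEQ_imp_Cauchy)
    have "Cauchy kf"
    proof (rule metric_CauchyI)
      fix e :: real assume "e > 0"
      then have "e * d > 0" using dpos by simp
      then obtain N where N: "\<And>m n. m \<ge> N \<Longrightarrow> n \<ge> N \<Longrightarrow> dist (x m) (x n) < e * d"
        using \<open>Cauchy x\<close> by (meson metric_CauchyD)
      show "\<exists>M. \<forall>m\<ge>M. \<forall>n\<ge>M. dist (kf m) (kf n) < e"
      proof (intro exI allI impI)
        fix m n assume "m \<ge> N" "n \<ge> N"
        then have "cmod (kf m - kf n) * d < e * d" using dk[of m n] N by fastforce
        then show "dist (kf m) (kf n) < e" using dpos by (simp add: dist_norm)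
      qed
    qed
    then obtain c where c: "kf \<longlonglongrightarrow> c" using Cauchy_convergent_iff convergent_def by blast
    have "(\<lambda>n. kf n *\<^sub>C a) \<longlonglongrightarrow> c *\<^sub>C a"
      using bounded_linear.tendsto[OF bl_scaleC_left c] .
    then have lim: "(\<lambda>n. x n - kf n *\<^sub>C a) \<longlonglongrightarrow> l - c *\<^sub>C a" using xl by (intro tendsto_diff)
    have "l - c *\<^sub>C a \<in> cv.span E"
      using clE[unfolded closed_sequential_limits, rule_format, of "\<lambda>n. x n - kf n *\<^sub>C a" "l - c *\<^sub>C a"] kf lim
      by blast
    then show "l \<in> cv.span (insert a E)" by (auto simp: cv.span_insert)
  qed
  have "1 / d \<ge> 0" using dpos by simp
  then have "max (1 / d) (K * (1 + norm a / d)) \<ge> 0" by (simp add: le_max_iff_disj)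
  then show ?case using closed bound by blast
qed

lemma rep_bound:
  fixes E :: "'a::complex_normed_vector set"
  assumes "finite E" "cv.independent E"
  shows "\<exists>K\<ge>0. \<forall>w\<in>cv.span E. \<forall>e\<in>E. cmod (cv.representation E w e) \<le> K * norm w"
proof -
  obtain K where K: "K \<ge> 0" "\<And>c e. e \<in> E \<Longrightarrow> cmod (c e) \<le> K * norm (\<Sum>e\<in>E. c e *\<^sub>C e)"
    using fin_indep_bound[OF assms] by blast
  have "cmod (cv.representation E w e) \<le> K * norm w" if "w \<in> cv.span E" "e \<in> E" for w e
    using K(2)[OF that(2), of "cv.representation E w"] cv.sum_representation_eq[OF assms(2) that(1) assms(1) order_refl]
    by simp
  then show ?thesis using K(1) by blast
qed




lemma cbl_clin: "cbounded_linear F \<Longrightarrow> clin F"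
  unfolding cbounded_linear_def clin_def using linear_add bounded_linear.linear by blast

lemma finite_rank_afr: "finite_rank F \<Longrightarrow> afr F"
  unfolding finite_rank_def afr_def cspan_eq using cbl_clin by blast

lemma frank_trace_atr:
  fixes F :: "'a::complex_normed_vector \<Rightarrow> 'a"
  assumes fr: "finite_rank F"
  shows "frank_trace F = atr F"
proof -
  have cb: "cbounded_linear F" and cF: "clin F" using fr cbl_clin by (auto simp: finite_rank_def)
  have blF: "bounded_linear F" using cb by (simp add: cbounded_linear_def)
  obtain B0 where B0: "finite B0" "range F \<subseteq> cv.span B0" using fr by (auto simp: finite_rank_def cspan_eq)
  have rsp: "range F = cv.span (range F)"
    using clin_span_image[OF cF, where B=UNIV] by simp
  obtain E where E: "E \<subseteq> range F" "cv.independent E" "range F \<subseteq> cv.span E"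
    using cv.maximal_independent_subset by blast
  have spE: "cv.span E = range F"
    using E cv.span_mono[OF E(1)] rsp by auto
  have finE: "finite E"
    using cv.independent_span_bound[OF B0(1) E(2)] E(1) B0(2) by auto
  obtain h where h: "bij_betw h {..<card E} E"
    using ex_bij_betw_nat_finite[OF finE] by (auto simp: atLeast0LessThan)
  obtain K where K: "K \<ge> 0" "\<And>w e. w \<in> cv.span E \<Longrightarrow> e \<in> E \<Longrightarrow> cmod (cv.representation E w e) \<le> K * norm w"
    using rep_bound[OF finE E(2)] by blast
  obtain KF where KF: "\<And>x. norm (F x) \<le> norm x * KF" "KF > 0"
    using bounded_linear.pos_bounded[OF blF] by blast
  have Fx: "F x \<in> cv.span E" for x using spE by auto
  define fs where "fs i x = cv.representation E (F x) (h i)" for i x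
  have hE: "h i \<in> E" if "i < card E" for i using h that by (auto simp: bij_betw_def)
  have cbf: "cbounded_functional (fs i)" if i: "i < card E" for i
    unfolding cbounded_functional_def
  proof
    have add: "fs i (x + y) = fs i x + fs i y" for x y
      unfolding fs_def using Fx E(2) clin_add[OF cF] by (simp add: cv.representation_add)
    have sc: "fs i (c *\<^sub>C x) = c * fs i x" for c x
      unfolding fs_def using Fx E(2) clin_scale[OF cF] by (simp add: cv.representation_scale)
    show "\<forall>c x. fs i (c *\<^sub>C x) = c * fs i x" using sc by blast
    show "bounded_linear (fs i)"
    proof (rule bounded_linear_intro[where K="K * KF"])
      show "fs i (x + y) = fs i x + fs i y" for x y by (rule add)
      show "fs i (r *\<^sub>R x) = r *\<^sub>R fs i x" for r x
        using sc[of "of_real r" x] by (simp add: scaleC_of_real scaleR_conv_of_real)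
      show "norm (fs i x) \<le> norm x * (K * KF)" for x
      proof -
        have "norm (fs i x) \<le> K * norm (F x)" unfolding fs_def using K(2)[OF Fx hE[OF i]] by simp
        also have "\<dots> \<le> K * (norm x * KF)" by (rule mult_left_mono[OF KF(1) K(1)])
        finally show ?thesis by (simp add: ac_simps)
      qed
    qed
  qed
  have rep: "F x = (\<Sum>i<card E. fs i x *\<^sub>C h i)" for x
    unfolding fs_def by (rule span_rep_sum[OF E(2) finE h Fx])
  define Pr where "Pr t \<longleftrightarrow> (\<exists>n (xs :: nat \<Rightarrow> 'a) (fs :: nat \<Rightarrow> 'a \<Rightarrow> complex).
      inj_on xs {..<n} \<and> cindependent (xs ` {..<n}) \<and> cspan (xs ` {..<n}) = range F \<and>
      (\<forall>i<n. cbounded_functional (fs i)) \<and>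
      (\<forall>x. F x = (\<Sum>i<n. fs i x *\<^sub>C xs i)) \<and>
      t = (\<Sum>i<n. fs i (xs i)))" for t
  have ex: "Pr (\<Sum>i<card E. fs i (h i))"
    unfolding Pr_def
    using h E(2) spE cbf rep
    by (intro exI[of _ "card E"] exI[of _ h] exI[of _ fs])
       (auto simp: bij_betw_def cind_eq cspan_eq)
  have ft: "frank_trace F = (SOME t. Pr t)" unfolding frank_trace_def Pr_def by simp
  have "Pr (frank_trace F)" unfolding ft by (rule someI[of Pr, OF ex])
  then obtain n :: nat and xs gs where g: "\<forall>i<n. cbounded_functional (gs i)" "\<forall>x. F x = (\<Sum>i<n. gs i x *\<^sub>C xs i)"
    "frank_trace F = (\<Sum>i<n. gs i (xs i))"
    unfolding Pr_def by (elim exE conjE) blast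
  have "frep F n xs gs"
    unfolding frep_def cfun_def using g(1,2)
    by (auto simp: cbounded_functional_def linear_add bounded_linear.linear)
  then show ?thesis using atr_eq[of F n xs gs] g(3) by simp
qed

theorem theorem2p5:
  fixes T S :: "'a::{complex_normed_vector, banach} \<Rightarrow> 'a"
  assumes "B_fredholm T"
    and "drazin_inverse_mod_F0 T S"
  shows "finite_rank (\<lambda>x. T (S x) - S (T x)) \<and>
         of_int (B_index T) = frank_trace (\<lambda>x. T (S x) - S (T x))"
proof
  have dz: "cbounded_linear T" "cbounded_linear S" "finite_rank (\<lambda>x. T (S x) - S (T x))"
    "finite_rank (\<lambda>x. S (T (S x)) - S x)"
    and kex: "\<exists>k\<ge>1. finite_rank (\<lambda>x. (T ^^ k) (S (T x)) - (T ^^ k) x)"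
    using assms(2) unfolding drazin_inverse_mod_F0_def by blast+
  show fr: "finite_rank (\<lambda>x. T (S x) - S (T x))" by (rule dz(3))
  have cT: "clin T" and cS: "clin S" using dz cbl_clin by auto
  obtain k where k: "finite_rank (\<lambda>x. (T ^^ k) (S (T x)) - (T ^^ k) x)" using kex by blast
  have drzS: "drz T S k"
    unfolding drz_def feq_def comp_def
    using cT cS finite_rank_afr[OF dz(3)] finite_rank_afr[OF dz(4)] finite_rank_afr[OF k] by simp
  define P where "P n \<longleftrightarrow> closed (range (T ^^ n)) \<and> fredholm_on (range (T ^^ n)) T" for n
  have "\<exists>n. P n" using assms(1) unfolding B_fredholm_def P_def by blast
  then have Pn: "P (LEAST n. P n)" by (rule LeastI_ex)
  define n where "n = (LEAST n. P n)"
  define M where "M = range (T ^^ n)"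
  have fo: "fredholm_on M T" using Pn unfolding P_def n_def M_def by simp
  have idx: "B_index T = index_on M T" unfolding B_index_def M_def n_def P_def by simp
  obtain BK C where f: "T ` M \<subseteq> M" "finite BK" "cv.span BK = {x\<in>M. T x = 0}"
    "finite C" "M = {r + c |r c. r \<in> T ` M \<and> c \<in> cv.span C}"
    using fo unfolding fredholm_on_def cspan_eq by blast
  obtain S0 k0 where S0: "drz T S0 k0" "atr (\<lambda>x. T (S0 x) - S0 (T x)) = of_int (index_on M T)"
    using main_alg[OF cT M_def f] by blast
  have "feq S S0" by (rule drz_unique[OF drzS S0(1)])
  then have afD: "afr (\<lambda>x. S x - S0 x)" by (simp add: feq_def)
  have afZ0: "afr (\<lambda>x. T (S0 x) - S0 (T x))" using S0(1) by (simp add: drz_def feq_def comp_def)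
  have afTD: "afr (\<lambda>x. T (S x - S0 x))" by (rule afr_compL[OF afD cT])
  have afDT: "afr (\<lambda>x. S (T x) - S0 (T x))" by (rule afr_compR[OF afD cT])
  have eq: "(\<lambda>x. T (S x) - S (T x)) = (\<lambda>x. ((T (S0 x) - S0 (T x)) + T (S x - S0 x)) - (S (T x) - S0 (T x)))"
    using clin_diff[OF cT] by (auto simp: algebra_simps)
  have cyc: "atr (\<lambda>x. S (T x) - S0 (T x)) = atr (\<lambda>x. T (S x - S0 x))"
    using atr_cyclic[OF afD cT] by simp
  have "atr (\<lambda>x. T (S x) - S (T x)) = 
      atr (\<lambda>x. ((T (S0 x) - S0 (T x)) + T (S x - S0 x)) - (S (T x) - S0 (T x)))"
    by (simp only: eq)
  also have "\<dots> = atr (\<lambda>x. (T (S0 x) - S0 (T x)) + T (S x - S0 x)) - atr (\<lambda>x. S (T x) - S0 (T x))"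
    by (rule atr_diff[OF afr_add[OF afZ0 afTD] afDT])
  also have "atr (\<lambda>x. (T (S0 x) - S0 (T x)) + T (S x - S0 x)) =
      atr (\<lambda>x. T (S0 x) - S0 (T x)) + atr (\<lambda>x. T (S x - S0 x))"
    by (rule atr_add[OF afZ0 afTD])
  finally have "atr (\<lambda>x. T (S x) - S (T x)) = atr (\<lambda>x. T (S0 x) - S0 (T x))"
    using cyc by simp
  then have "atr (\<lambda>x. T (S x) - S (T x)) = of_int (B_index T)" using S0(2) idx by simp
  then show "of_int (B_index T) = frank_trace (\<lambda>x. T (S x) - S (T x))"
    using frank_trace_atr[OF fr] by simp
qed


end
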